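(* There exist elements $c_1,\dots,c_r$ of $\mathbb Q(R_{1,0},\dots,R_{r,1})$, independent of $n$, such that with $c_0=c_{r+1}=1$, $$\sum_{m=0}^{r+1}(-1)^m\,c_{r+1-m}\,R_{1,n+m}=0\qquad\text{for all } n\in\mathbb Z.$$
   Context: Fix an integer $r\ge1$ and let $I_r=\{1,\dots,r\}$. Let $R_{1,0},\dots,R_{r,0},R_{1,1},\dots,R_{r,1}$ be $2r$ algebraically independent indeterminates over $\mathbb Q$. The $A_r$ $Q$-system is the unique family $(R_{\alpha,n})_{0\le\alpha\le r+1,\ n\in\mathbb Z}$ of nonzero elements of $\mathbb Q(R_{1,0},\dots,R_{r,1})$ with these initial values, $R_{0,n}=R_{r+1,n}=1$ for all $n$, and $R_{\alpha,n+1}R_{\alpha,n-1}=R_{\alpha,n}^2+R_{\alpha+1,n}R_{\alpha-1,n}$ for $\alpha\in I_r$, $n\in\mathbb Z$. *)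

theory Defs
  imports Complex_Main "HOL-Library.Poly_Mapping"
begin

text \<open>Multivariate polynomials over the rationals in variables of type 'v:
  finitely supported maps from monomials (finitely supported exponent maps) to coefficients.\<close>
type_synonym 'v ratpoly = "('v \<Rightarrow>\<^sub>0 nat) \<Rightarrow>\<^sub>0 rat"

definition mpoly_eval :: "'v ratpoly \<Rightarrow> ('v \<Rightarrow> 'a::field_char_0) \<Rightarrow> 'a" where
  "mpoly_eval p x = (\<Sum>mon\<in>Poly_Mapping.keys p. of_rat (Poly_Mapping.lookup p mon) * (\<Prod>v\<in>Poly_Mapping.keys mon. x v ^ Poly_Mapping.lookup mon v))"

definition alg_indep_over_Q :: "'v set \<Rightarrow> ('v \<Rightarrow> 'a::field_char_0) \<Rightarrow> bool" where
  "alg_indep_over_Q V x \<longleftrightarrow>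
     inj_on x V \<and>
     (\<forall>p::'v ratpoly. (\<forall>m\<in>Poly_Mapping.keys p. Poly_Mapping.keys m \<subseteq> V) \<longrightarrow> mpoly_eval p x = 0 \<longrightarrow> p = 0)"

inductive_set rat_subfield :: "'a::field_char_0 set \<Rightarrow> 'a set" for S where
  rat: "of_rat q \<in> rat_subfield S"
| gen: "s \<in> S \<Longrightarrow> s \<in> rat_subfield S"
| add: "a \<in> rat_subfield S \<Longrightarrow> b \<in> rat_subfield S \<Longrightarrow> a + b \<in> rat_subfield S"
| neg: "a \<in> rat_subfield S \<Longrightarrow> - a \<in> rat_subfield S"
| mult: "a \<in> rat_subfield S \<Longrightarrow> b \<in> rat_subfield S \<Longrightarrow> a * b \<in> rat_subfield S"
| inv: "a \<in> rat_subfield S \<Longrightarrow> inverse a \<in> rat_subfield S"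

end

theory Submission
  imports Defs "Jordan_Normal_Form.Determinant" "Jordan_Normal_Form.Gauss_Jordan_Elimination"
begin


definition D :: "nat \<Rightarrow> (nat \<Rightarrow> nat \<Rightarrow> 'a::comm_ring_1) \<Rightarrow> 'a" where
  "D n g = det (mat n n (\<lambda>(i,j). g i j))"

lemma D_cong: assumes "\<And>i j. i < n \<Longrightarrow> j < n \<Longrightarrow> g i j = h i j" shows "D n g = D n h"
proof -
  have "mat n n (\<lambda>(i,j). g i j) = mat n n (\<lambda>(i,j). h i j)"
    by (rule eq_matI) (auto simp: assms)
  thus ?thesis unfolding D_def by simp
qed

lemma D_0[simp]: "D 0 g = 1"
  unfolding D_def by (simp add: det_dim_zero)

lemma D_laplace:
  assumes i: "i < Suc n"
  shows "D (Suc n) g = (\<Sum>j<Suc n. g i j * ((-1)^(i+j) *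
     D n (\<lambda>a b. g (if a < i then a else Suc a) (if b < j then b else Suc b))))"
proof -
  let ?A = "mat (Suc n) (Suc n) (\<lambda>(i,j). g i j)"
  have A: "?A \<in> carrier_mat (Suc n) (Suc n)" by simp
  have "D (Suc n) g = (\<Sum>j<Suc n. ?A $$ (i,j) * cofactor ?A i j)"
    unfolding D_def by (rule laplace_expansion_row[OF A i])
  also have "\<dots> = (\<Sum>j<Suc n. g i j * ((-1)^(i+j) *
     D n (\<lambda>a b. g (if a < i then a else Suc a) (if b < j then b else Suc b))))"
  proof (rule sum.cong[OF refl])
    fix j assume j: "j \<in> {..<Suc n}"
    have "mat_delete ?A i j = mat n n (\<lambda>(a,b). g (if a < i then a else Suc a) (if b < j then b else Suc b))"
      unfolding mat_delete_def by (rule eq_matI) auto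
    thus "?A $$ (i,j) * cofactor ?A i j = g i j * ((-1)^(i+j) *
     D n (\<lambda>a b. g (if a < i then a else Suc a) (if b < j then b else Suc b)))"
      using i j unfolding cofactor_def D_def by simp
  qed
  finally show ?thesis .
qed

lemma D_1: "D (Suc 0) g = g 0 0"
  using D_laplace[of 0 0 g] by simp

lemma D_unit_row:
  assumes i: "i < Suc n" and j: "j < Suc n" and z: "\<And>b. b < Suc n \<Longrightarrow> b \<noteq> j \<Longrightarrow> g i b = 0"
  shows "D (Suc n) g = g i j * ((-1)^(i+j) *
     D n (\<lambda>a b. g (if a < i then a else Suc a) (if b < j then b else Suc b)))"
proof -
  have "D (Suc n) g = (\<Sum>b<Suc n. g i b * ((-1)^(i+b) *
     D n (\<lambda>a c. g (if a < i then a else Suc a) (if c < b then c else Suc c))))"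
    by (rule D_laplace[OF i])
  also have "\<dots> = g i j * ((-1)^(i+j) *
     D n (\<lambda>a b. g (if a < i then a else Suc a) (if b < j then b else Suc b)))"
    by (subst sum.remove[where x=j]) (use j z in \<open>auto intro!: sum.neutral\<close>)
  finally show ?thesis .
qed

lemma D_addrow:
  assumes i: "i < n" and k: "k < n" and ki: "k \<noteq> i"
  shows "D n (\<lambda>a b. if a = i then g i b + c * g k b else g a b) = D n g"
proof -
  let ?A = "mat n n (\<lambda>(i,j). g i j)"
  have "addrow c i k ?A = mat n n (\<lambda>(a,b). if a = i then g i b + c * g k b else g a b)"
    by (rule eq_matI) (use i k in auto)
  moreover have "det (addrow c i k ?A) = det ?A"
    by (rule det_addrow[OF k]) (use ki in auto)
  ultimately show ?thesis unfolding D_def by simp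
qed

lemma D_addrows:
  assumes fin: "finite K" and Kn: "K \<subseteq> {..<n}" and i: "i < n" and iK: "i \<notin> K"
  shows "D n (\<lambda>a b. if a = i then g i b + (\<Sum>k\<in>K. c k * g k b) else g a b) = D n g"
  using fin Kn iK
proof (induction K rule: finite_induct)
  case empty
  then show ?case by (intro D_cong) auto
next
  case (insert k K)
  let ?h = "\<lambda>a b. if a = i then g i b + (\<Sum>k\<in>K. c k * g k b) else g a b"
  have ki: "k \<noteq> i" "k < n" using insert by auto
  have "D n (\<lambda>a b. if a = i then g i b + (\<Sum>k\<in>insert k K. c k * g k b) else g a b)
      = D n (\<lambda>a b. if a = i then ?h i b + c k * ?h k b else ?h a b)"
  proof (rule D_cong)
    fix a b assume "a < n" "b < n"
    show "(if a = i then g i b + (\<Sum>k\<in>insert k K. c k * g k b) else g a b) =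
      (if a = i then ?h i b + c k * ?h k b else ?h a b)"
      by (cases "a = i") (use insert ki in \<open>simp_all add: ac_simps\<close>)
  qed
  also have "\<dots> = D n ?h" by (rule D_addrow[OF i ki(2) ki(1)])
  also have "\<dots> = D n g" using insert by auto
  finally show ?case .
qed

lemma mat_vec_eq: "mat n n (\<lambda>(i,j). A i j) *\<^sub>v vec n w = vec n (\<lambda>i. \<Sum>j<n. A i j * w j)"
  by (rule eq_vecI) (auto simp: scalar_prod_def lessThan_atLeast0 intro!: sum.cong)

lemma LA1:
  fixes A :: "nat \<Rightarrow> nat \<Rightarrow> 'a::field"
  assumes d: "D n A \<noteq> 0" and h: "\<And>i. i < n \<Longrightarrow> (\<Sum>j<n. A i j * w j) = 0" and j: "j < n"
  shows "w j = 0"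
proof (rule ccontr)
  assume wj: "w j \<noteq> 0"
  let ?A = "mat n n (\<lambda>(i,j). A i j)"
  have "\<exists>v. v \<in> carrier_vec n \<and> v \<noteq> 0\<^sub>v n \<and> ?A *\<^sub>v v = 0\<^sub>v n"
  proof (intro exI conjI)
    show "vec n w \<in> carrier_vec n" by simp
    show "vec n w \<noteq> 0\<^sub>v n" using wj j by (metis index_vec index_zero_vec(1))
    show "?A *\<^sub>v vec n w = 0\<^sub>v n" unfolding mat_vec_eq by (rule eq_vecI) (auto simp: h)
  qed
  hence "det ?A = 0" using det_0_iff_vec_prod_zero_field[of ?A n] by auto
  thus False using d unfolding D_def by simp
qed

lemma LA2:
  fixes A :: "nat \<Rightarrow> nat \<Rightarrow> 'a::field"
  assumes d: "D n A = 0"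
  shows "\<exists>w. (\<exists>j<n. w j \<noteq> 0) \<and> (\<forall>i<n. (\<Sum>j<n. A i j * w j) = 0)"
proof -
  let ?A = "mat n n (\<lambda>(i,j). A i j)"
  have "det ?A = 0" using d unfolding D_def by simp
  then obtain v where v: "v \<in> carrier_vec n" "v \<noteq> 0\<^sub>v n" "?A *\<^sub>v v = 0\<^sub>v n"
    using det_0_iff_vec_prod_zero_field[of ?A n] by auto
  have vv: "v = vec n (\<lambda>j. v $ j)" using v(1) by (intro eq_vecI) auto
  show ?thesis
  proof (rule exI[of _ "\<lambda>j. v $ j"], intro conjI allI impI)
    show "\<exists>j<n. v $ j \<noteq> 0"
    proof (rule ccontr)
      assume "\<not> (\<exists>j<n. v $ j \<noteq> 0)"
      hence "v = 0\<^sub>v n" using v(1) by (intro eq_vecI) auto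
      thus False using v(2) by simp
    qed
    fix i assume i: "i < n"
    have "(?A *\<^sub>v vec n (\<lambda>j. v $ j)) $ i = 0" unfolding vv[symmetric] using v(3) i by simp
    thus "(\<Sum>j<n. A i j * v $ j) = 0" unfolding mat_vec_eq using i by simp
  qed
qed

lemma LA3:
  fixes A :: "nat \<Rightarrow> nat \<Rightarrow> 'a::field"
  assumes d: "D n A \<noteq> 0"
  shows "\<exists>w. \<forall>i<n. (\<Sum>j<n. A i j * w j) = b i"
proof -
  let ?A = "mat n n (\<lambda>(i,j). A i j)"
  have A: "?A \<in> carrier_mat n n" by simp
  have "?A \<in> Units (ring_mat TYPE('a) n ())"
    by (rule det_non_zero_imp_unit[OF A]) (use d in \<open>simp add: D_def\<close>)
  then obtain B where B: "B \<in> carrier_mat n n" "?A * B = 1\<^sub>m n"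
    unfolding Units_def ring_mat_def by auto
  let ?x = "B *\<^sub>v vec n b"
  have x: "?x \<in> carrier_vec n" using B by simp
  have "?A *\<^sub>v ?x = (?A * B) *\<^sub>v vec n b"
    using B A by (metis assoc_mult_mat_vec vec_carrier)
  also have "\<dots> = vec n b" using B by simp
  finally have eq: "?A *\<^sub>v ?x = vec n b" .
  have xx: "?x = vec n (\<lambda>j. ?x $ j)" using x B by (intro eq_vecI) auto
  show ?thesis
  proof (rule exI[of _ "\<lambda>j. ?x $ j"], intro allI impI)
    fix i assume i: "i < n"
    have "(?A *\<^sub>v vec n (\<lambda>j. ?x $ j)) $ i = b i" unfolding xx[symmetric] using eq i by simp
    thus "(\<Sum>j<n. A i j * ?x $ j) = b i" unfolding mat_vec_eq using i by simp
  qed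
qed

lemma cramer_D:
  assumes h: "\<And>i. i < n \<Longrightarrow> (\<Sum>j<n. A i j * w j) = b i" and k: "k < n"
  shows "w k * D n A = D n (\<lambda>i j. if j = k then b i else A i j)"
proof -
  let ?A = "mat n n (\<lambda>(i,j). A i j)"
  have e1: "?A *\<^sub>v vec n w = vec n b" unfolding mat_vec_eq by (rule eq_vecI) (auto simp: h)
  have e2: "det (replace_col ?A (?A *\<^sub>v vec n w) k) = vec n w $ k * det ?A"
    by (rule cramer_lemma_mat[OF _ _ k]) auto
  have e3: "replace_col ?A (vec n b) k = mat n n (\<lambda>(i,j). if j = k then b i else A i j)"
    unfolding replace_col_def by (rule eq_matI) auto
  have "vec n w $ k = w k" using k by simp
  with e2 have "det (replace_col ?A (vec n b) k) = w k * det ?A" unfolding e1 by simp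
  hence "det (mat n n (\<lambda>(i,j). if j = k then b i else A i j)) = w k * det ?A" by (simp only: e3)
  thus ?thesis unfolding D_def by (metis mult.commute)
qed

lemma D_transpose: "D n (\<lambda>i j. g j i) = D n g"
proof -
  have "mat n n (\<lambda>(i,j). g j i) = (mat n n (\<lambda>(i,j). g i j))\<^sup>T"
    by (rule eq_matI) auto
  thus ?thesis unfolding D_def using det_transpose[of "mat n n (\<lambda>(i,j). g i j)" n] by simp
qed

lemma D_addrows2:
  assumes i: "i < n" and K: "\<And>k. k < m \<Longrightarrow> s + k < n \<and> s + k \<noteq> i"
  and h: "\<And>a b. a < n \<Longrightarrow> b < n \<Longrightarrow> h a b = (if a = i then g i b + (\<Sum>k<m. c k * g (s + k) b) else g a b)"
  shows "D n h = D n g"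
proof -
  have inj: "inj_on (\<lambda>k. s + k) {..<m}" by (auto simp: inj_on_def)
  have "D n h = D n (\<lambda>a b. if a = i then g i b + (\<Sum>k\<in>(\<lambda>k. s+k) ` {..<m}. c (k - s) * g k b) else g a b)"
    by (rule D_cong) (simp add: h sum.reindex[OF inj])
  also have "\<dots> = D n g" by (rule D_addrows) (use i K in auto)
  finally show ?thesis .
qed

lemma DJ:
  fixes g :: "nat \<Rightarrow> nat \<Rightarrow> 'a::field"
  assumes N0: "D m (\<lambda>i j. g (Suc i) (Suc j)) \<noteq> 0"
  shows "D (Suc (Suc m)) g * D m (\<lambda>i j. g (Suc i) (Suc j)) =
     D (Suc m) g * D (Suc m) (\<lambda>i j. g (Suc i) (Suc j)) - D (Suc m) (\<lambda>i j. g i (Suc j)) * D (Suc m) (\<lambda>i j. g (Suc i) j)"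
proof -
  define N where "N = D m (\<lambda>i j. g (Suc i) (Suc j))"
  have NT: "D m (\<lambda>i j. g (Suc j) (Suc i)) \<noteq> 0"
    using N0 D_transpose[of m "\<lambda>i j. g (Suc i) (Suc j)"] by simp
  obtain p where p: "\<forall>i<m. (\<Sum>j<m. g (Suc j) (Suc i) * p j) = g 0 (Suc i)"
    using LA3[OF NT, of "\<lambda>i. g 0 (Suc i)"] by blast
  obtain q where q: "\<forall>i<m. (\<Sum>j<m. g (Suc j) (Suc i) * q j) = g (Suc m) (Suc i)"
    using LA3[OF NT, of "\<lambda>i. g (Suc m) (Suc i)"] by blast
  define u where "u b = g 0 b + (\<Sum>k<m. (- p k) * g (Suc k) b)" for b
  define v where "v b = g (Suc m) b + (\<Sum>k<m. (- q k) * g (Suc k) b)" for b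
  have u0: "u (Suc i) = 0" if "i < m" for i
    using p that unfolding u_def by (simp add: sum_negf mult.commute)
  have v0: "v (Suc i) = 0" if "i < m" for i
    using q that unfolding v_def by (simp add: sum_negf mult.commute)
  define h1 where "h1 a b = (if a = 0 then u b else g a b)" for a b
  define h where "h a b = (if a = 0 then u b else if a = Suc m then v b else g a b)" for a b
  have hu[simp]: "h 0 b = u b" for b by (simp add: h_def)
  have hv[simp]: "h (Suc m) b = v b" for b by (simp add: h_def)
  have Nh: "D m (\<lambda>i j. h (Suc i) (Suc j)) = N"
    unfolding N_def by (rule D_cong) (auto simp: h_def)
  have I1a: "D (Suc (Suc m)) h1 = D (Suc (Suc m)) g"
    by (rule D_addrows2[where i=0 and m=m and s=1 and c="\<lambda>k. - p k"]) (auto simp: h1_def u_def)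
  have I1b: "D (Suc (Suc m)) h = D (Suc (Suc m)) h1"
    by (rule D_addrows2[where i="Suc m" and m=m and s=1 and c="\<lambda>k. - q k"]) (auto simp: h1_def h_def v_def)
  have I2: "D (Suc m) h = D (Suc m) g"
    by (rule D_addrows2[where i=0 and m=m and s=1 and c="\<lambda>k. - p k"]) (auto simp: h_def u_def)
  have I3: "D (Suc m) (\<lambda>i j. h (Suc i) (Suc j)) = D (Suc m) (\<lambda>i j. g (Suc i) (Suc j))"
    by (rule D_addrows2[where i=m and m=m and s=0 and c="\<lambda>k. - q k"]) (auto simp: h_def v_def)
  have I4: "D (Suc m) (\<lambda>i j. h i (Suc j)) = D (Suc m) (\<lambda>i j. g i (Suc j))"
    by (rule D_addrows2[where i=0 and m=m and s=1 and c="\<lambda>k. - p k"]) (auto simp: h_def u_def)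
  have I5: "D (Suc m) (\<lambda>i j. h (Suc i) j) = D (Suc m) (\<lambda>i j. g (Suc i) j)"
    by (rule D_addrows2[where i=m and m=m and s=0 and c="\<lambda>k. - q k"]) (auto simp: h_def v_def)
  have C3: "D (Suc m) (\<lambda>i j. h (Suc i) (Suc j)) = v (Suc m) * N"
  proof -
    have "D (Suc m) (\<lambda>i j. h (Suc i) (Suc j)) = h (Suc m) (Suc m) * ((-1)^(m+m) *
       D m (\<lambda>a b. h (Suc (if a < m then a else Suc a)) (Suc (if b < m then b else Suc b))))"
      by (rule D_unit_row) (auto simp: h_def v0)
    also have "D m (\<lambda>a b. h (Suc (if a < m then a else Suc a)) (Suc (if b < m then b else Suc b))) = N"
      unfolding Nh[symmetric] by (rule D_cong) auto
    finally show ?thesis by (simp add: power_add[symmetric] mult_2[symmetric] power_mult)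
  qed
  have C5: "D (Suc m) (\<lambda>i j. h (Suc i) j) = v 0 * ((-1)^m * N)"
  proof -
    have "D (Suc m) (\<lambda>i j. h (Suc i) j) = h (Suc m) 0 * ((-1)^(m+0) *
       D m (\<lambda>a b. h (Suc (if a < m then a else Suc a)) (if b < 0 then b else Suc b)))"
      by (rule D_unit_row) (auto simp: h_def v0 gr0_conv_Suc)
    also have "D m (\<lambda>a b. h (Suc (if a < m then a else Suc a)) (if b < 0 then b else Suc b)) = N"
      unfolding Nh[symmetric] by (rule D_cong) auto
    finally show ?thesis by simp
  qed
  have C2: "D (Suc m) h = u 0 * N"
  proof -
    have "D (Suc m) h = h 0 0 * ((-1)^(0+0) *
       D m (\<lambda>a b. h (if a < 0 then a else Suc a) (if b < 0 then b else Suc b)))"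
      by (rule D_unit_row) (auto simp: h_def u0 gr0_conv_Suc)
    also have "D m (\<lambda>a b. h (if a < 0 then a else Suc a) (if b < 0 then b else Suc b)) = N"
      unfolding Nh[symmetric] by (rule D_cong) auto
    finally show ?thesis by simp
  qed
  have C4: "D (Suc m) (\<lambda>i j. h i (Suc j)) = u (Suc m) * ((-1)^m * N)"
  proof -
    have "D (Suc m) (\<lambda>i j. h i (Suc j)) = h 0 (Suc m) * ((-1)^(0+m) *
       D m (\<lambda>a b. h (if a < 0 then a else Suc a) (Suc (if b < m then b else Suc b))))"
      by (rule D_unit_row) (auto simp: h_def u0)
    also have "D m (\<lambda>a b. h (if a < 0 then a else Suc a) (Suc (if b < m then b else Suc b))) = N"
      unfolding Nh[symmetric] by (rule D_cong) auto
    finally show ?thesis by simp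
  qed
  have C1: "D (Suc (Suc m)) h = N * (u 0 * v (Suc m) - u (Suc m) * v 0)"
  proof -
    let ?F = "\<lambda>j. h 0 j * ((-1)^(0+j) *
     D (Suc m) (\<lambda>a b. h (if a < 0 then a else Suc a) (if b < j then b else Suc b)))"
    have "D (Suc (Suc m)) h = (\<Sum>j<Suc (Suc m). ?F j)"
      by (rule D_laplace) simp
    also have "\<dots> = (\<Sum>j\<in>{0, Suc m}. ?F j)"
    proof (rule sum.mono_neutral_right)
      show "\<forall>j\<in>{..<Suc (Suc m)} - {0, Suc m}. ?F j = 0"
      proof
        fix j assume j: "j \<in> {..<Suc (Suc m)} - {0, Suc m}"
        then obtain i where "j = Suc i" "i < m" by (cases j) auto
        thus "?F j = 0" by (simp add: h_def u0)
      qed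
    qed auto
    also have "\<dots> = ?F 0 + ?F (Suc m)" by simp
    also have "?F 0 = u 0 * (v (Suc m) * N)"
    proof -
      have "D (Suc m) (\<lambda>a b. h (if a < 0 then a else Suc a) (if b < 0 then b else Suc b))
          = D (Suc m) (\<lambda>i j. h (Suc i) (Suc j))" by (rule D_cong) auto
      thus ?thesis using C3 by simp
    qed
    also have "?F (Suc m) = - (u (Suc m) * (v 0 * N))"
    proof -
      have "D (Suc m) (\<lambda>a b. h (if a < 0 then a else Suc a) (if b < Suc m then b else Suc b))
          = D (Suc m) (\<lambda>i j. h (Suc i) j)" by (rule D_cong) auto
      hence "?F (Suc m) = u (Suc m) * ((-1)^(Suc m) * (v 0 * ((-1)^m * N)))" using C5 by simp
      also have "\<dots> = - (u (Suc m) * (v 0 * N) * ((-1)^m * (-1)^m))" by (simp add: algebra_simps)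
      also have "(-1::'a)^m * (-1)^m = 1" by (simp add: power_add[symmetric] mult_2[symmetric] power_mult)
      finally show ?thesis by simp
    qed
    finally show ?thesis by (simp add: algebra_simps)
  qed
  have sq: "(-1::'a)^m * (-1)^m = 1" by (simp add: power_add[symmetric] mult_2[symmetric] power_mult)
  have "D (Suc (Suc m)) g * N = N * (u 0 * v (Suc m) - u (Suc m) * v 0) * N"
    using I1a I1b C1 by simp
  also have "\<dots> = (u 0 * N) * (v (Suc m) * N) - (u (Suc m) * ((-1)^m * N)) * (v 0 * ((-1)^m * N))"
  proof -
    have "(u (Suc m) * ((-1)^m * N)) * (v 0 * ((-1)^m * N)) = u (Suc m) * v 0 * N * N * ((-1::'a)^m * (-1)^m)"
      by (simp add: algebra_simps)
    thus ?thesis unfolding sq by (simp add: algebra_simps)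
  qed
  also have "\<dots> = D (Suc m) g * D (Suc m) (\<lambda>i j. g (Suc i) (Suc j)) - D (Suc m) (\<lambda>i j. g i (Suc j)) * D (Suc m) (\<lambda>i j. g (Suc i) j)"
    using C2 C3 C4 C5 I2 I3 I4 I5 by simp
  finally show ?thesis unfolding N_def .
qed


lemma sf_of_int: "of_int z \<in> rat_subfield S"
  using rat_subfield.rat[of "of_int z" S] by simp

lemma sf_0: "0 \<in> rat_subfield S" using sf_of_int[of 0] by simp
lemma sf_1: "1 \<in> rat_subfield S" using sf_of_int[of 1] by simp

lemma sf_diff: assumes "a \<in> rat_subfield S" "b \<in> rat_subfield S" shows "a - b \<in> rat_subfield S"
proof -
  have "a + - b \<in> rat_subfield S" by (intro rat_subfield.add rat_subfield.neg assms)
  thus ?thesis by simp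
qed

lemma sf_div: assumes "a \<in> rat_subfield S" "b \<in> rat_subfield S" shows "a / b \<in> rat_subfield S"
proof -
  have "a * inverse b \<in> rat_subfield S" by (intro rat_subfield.mult rat_subfield.inv assms)
  thus ?thesis by (simp add: divide_inverse)
qed

lemma sf_pow: "a \<in> rat_subfield S \<Longrightarrow> a ^ n \<in> rat_subfield S"
  by (induction n) (auto intro: sf_1 rat_subfield.mult)

lemma sf_sum: "finite A \<Longrightarrow> (\<And>x. x \<in> A \<Longrightarrow> f x \<in> rat_subfield S) \<Longrightarrow> sum f A \<in> rat_subfield S"
  by (induction A rule: finite_induct) (auto intro: sf_0 rat_subfield.add)

lemma sf_prod: "finite A \<Longrightarrow> (\<And>x. x \<in> A \<Longrightarrow> f x \<in> rat_subfield S) \<Longrightarrow> prod f A \<in> rat_subfield S"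
  by (induction A rule: finite_induct) (auto intro: sf_1 rat_subfield.mult)

lemma sf_D:
  assumes "\<And>i j. i < n \<Longrightarrow> j < n \<Longrightarrow> F i j \<in> rat_subfield S"
  shows "D n F \<in> rat_subfield S"
proof -
  have "D n F = (\<Sum>p\<in>{p. p permutes {0..<n}}. signof p * (\<Prod>i = 0..<n. mat n n (\<lambda>(i,j). F i j) $$ (i, p i)))"
    unfolding D_def by (rule det_def') simp
  also have "\<dots> \<in> rat_subfield S"
  proof (rule sf_sum)
    show "finite {p. p permutes {0..<n}}" by (simp add: finite_permutations)
    fix p assume p: "p \<in> {p. p permutes {0..<n}}"
    hence pi: "p i < n" if "i < n" for i using that permutes_in_image[of p "{0..<n}" i] by auto
    have "(\<Prod>i = 0..<n. mat n n (\<lambda>(i,j). F i j) $$ (i, p i)) \<in> rat_subfield S"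
    proof (rule sf_prod)
      fix i assume "i \<in> {0..<n}"
      thus "mat n n (\<lambda>(i,j). F i j) $$ (i, p i) \<in> rat_subfield S" using pi assms by simp
    qed simp
    thus "signof p * (\<Prod>i = 0..<n. mat n n (\<lambda>(i,j). F i j) $$ (i, p i)) \<in> rat_subfield S"
      by (rule rat_subfield.mult[OF sf_of_int])
  qed
  finally show ?thesis .
qed



theorem mainTheorem2:
  fixes r :: nat and R :: "nat \<Rightarrow> int \<Rightarrow> 'a::field_char_0"
  assumes "r \<ge> 1"
    and "alg_indep_over_Q {(\<alpha>, k). \<alpha> \<in> {1..r} \<and> k \<in> {0, 1}} (\<lambda>(\<alpha>, k). R \<alpha> k)"
    and "\<forall>n. R 0 n = 1 \<and> R (r + 1) n = 1"
    and "\<forall>\<alpha>\<in>{1..r}. \<forall>n. R \<alpha> (n + 1) * R \<alpha> (n - 1) = (R \<alpha> n)\<^sup>2 + R (\<alpha> + 1) n * R (\<alpha> - 1) n"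
    and "\<forall>\<alpha>\<in>{0..r + 1}. \<forall>n. R \<alpha> n \<noteq> 0"
  shows "\<exists>c :: nat \<Rightarrow> 'a.
           (\<forall>i\<in>{1..r}. c i \<in> rat_subfield {R \<alpha> k | \<alpha> k. \<alpha> \<in> {1..r} \<and> k \<in> {0, 1}}) \<and>
           c 0 = 1 \<and> c (r + 1) = 1 \<and>
           (\<forall>n::int. (\<Sum>m = 0..r + 1. (-1) ^ m * c (r + 1 - m) * R 1 (n + int m)) = 0)"
proof -
  have R0: "R 0 n = 1" for n using assms(3) by simp
  have Rr: "R (Suc r) n = 1" for n using assms(3) by simp
  have Q: "R a (n + 1) * R a (n - 1) = (R a n)\<^sup>2 + R (Suc a) n * R (a - 1) n"
    if "1 \<le> a" "a \<le> r" for a n using assms(4) that by simp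
  have NZ: "R a n \<noteq> 0" if "a \<le> Suc r" for a n using assms(5) that by simp
  define H where "H n = (\<lambda>i j. R 1 (n + int (i + j)))" for n :: int
  have Hs2: "(\<lambda>i j. H n (Suc i) (Suc j)) = H (n + 2)" for n
    unfolding H_def by (intro ext) (simp add: algebra_simps)
  have Hs1a: "(\<lambda>i j. H n i (Suc j)) = H (n + 1)" for n
    unfolding H_def by (intro ext) (simp add: algebra_simps)
  have Hs1b: "(\<lambda>i j. H n (Suc i) j) = H (n + 1)" for n
    unfolding H_def by (intro ext) (simp add: algebra_simps)
  have A: "\<forall>n. D a (H n) = R a (n + int a - 1)" if "a \<le> Suc r" for a
    using that
  proof (induction a rule: nat_less_induct)
    case (1 a)
    show ?case
    proof (cases a)
      case 0
      then show ?thesis by (simp add: R0)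
    next
      case (Suc a')
      show ?thesis
      proof (cases a')
        case 0
        then show ?thesis using Suc by (simp add: D_1 H_def)
      next
        case (Suc m)
        have a: "a = Suc (Suc m)" using \<open>a = Suc a'\<close> Suc by simp
        show ?thesis
        proof
          fix n
          have IHm: "D m (H (n + 2)) = R m (n + int m + 1)"
            using "1.IH"[rule_format, of m "n+2"] "1.prems" a by (simp add: algebra_simps)
          have IH1: "D (Suc m) (H k) = R (Suc m) (k + int m)" for k
            using "1.IH"[rule_format, of "Suc m" k] "1.prems" a by (simp add: algebra_simps)
          have Nz: "R m (n + int m + 1) \<noteq> 0" using NZ "1.prems" a by simp
          have dj: "D (Suc (Suc m)) (H n) * D m (H (n + 2)) =
              D (Suc m) (H n) * D (Suc m) (H (n + 2)) - D (Suc m) (H (n + 1)) * D (Suc m) (H (n + 1))"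
            using DJ[of m "H n"] unfolding Hs2 Hs1a Hs1b using IHm Nz by simp
          have q: "R (Suc m) (n + int m + 1 + 1) * R (Suc m) (n + int m + 1 - 1) =
              (R (Suc m) (n + int m + 1))\<^sup>2 + R (Suc (Suc m)) (n + int m + 1) * R m (n + int m + 1)"
            using Q[of "Suc m" "n + int m + 1"] "1.prems" a by simp
          have "D (Suc (Suc m)) (H n) * R m (n + int m + 1) = R (Suc (Suc m)) (n + int m + 1) * R m (n + int m + 1)"
            using dj q unfolding IHm IH1 by (simp add: power2_eq_square algebra_simps)
          hence "D (Suc (Suc m)) (H n) = R (Suc (Suc m)) (n + int m + 1)" using Nz by simp
          thus "D a (H n) = R a (n + int a - 1)" using a by (simp add: algebra_simps)
        qed
      qed
    qed
  qed
  have C: "D (Suc r) (H n) = 1" for n using A[of "Suc r"] Rr by simp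
  have B: "D (Suc (Suc r)) (H n) = 0" for n
  proof -
    have Nz: "D r (H (n + 2)) \<noteq> 0" using A[of r] NZ[of r] by simp
    have "D (Suc (Suc r)) (H n) * D r (H (n + 2)) = 0"
      using DJ[of r "H n"] unfolding Hs2 Hs1a Hs1b using Nz C by simp
    thus ?thesis using Nz by simp
  qed

  have HC: "D (Suc r) (H n) \<noteq> 0" for n using C by simp
  obtain v where v: "\<forall>i<Suc r. (\<Sum>j<Suc r. H 0 i j * v j) = - R 1 (int (i + Suc r))"
    using LA3[OF HC[of 0], of "\<lambda>i. - R 1 (int (i + Suc r))"] by blast
  define V where "V j = (if j < Suc r then v j else 1)" for j
  define e where "e k = (\<Sum>j<Suc (Suc r). R 1 (k + int j) * V j)" for k
  have eH: "e (n + int i) = (\<Sum>j<Suc (Suc r). H n i j * V j)" for n i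
    unfolding e_def H_def by (intro sum.cong) (simp_all add: algebra_simps)
  have split: "(\<Sum>j<Suc (Suc r). H n i j * W j) = (\<Sum>j<Suc r. H n i j * W j) + H n i (Suc r) * W (Suc r)" for n i W
    by simp
  have VV: "(\<Sum>j<Suc r. H n i j * V j) = (\<Sum>j<Suc r. H n i j * v j)" for n i
    unfolding V_def by (intro sum.cong) simp_all
  have V1: "V (Suc r) = 1" unfolding V_def by simp
  have eH2: "e (n + int i) = (\<Sum>j<Suc r. H n i j * v j) + H n i (Suc r)" for n i
    unfolding eH split VV V1 by simp
  have kern: "\<exists>W. W (Suc r) = 1 \<and> (\<forall>i<Suc (Suc r). (\<Sum>j<Suc (Suc r). H n i j * W j) = 0)" for n
  proof -
    obtain w where w: "\<exists>j<Suc (Suc r). w j \<noteq> 0" "\<forall>i<Suc (Suc r). (\<Sum>j<Suc (Suc r). H n i j * w j) = 0"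
      using LA2[OF B[of n]] by blast
    have wr: "w (Suc r) \<noteq> 0"
    proof
      assume w0: "w (Suc r) = 0"
      have "w j = 0" if "j < Suc r" for j
      proof (rule LA1[OF HC[of n] _ that])
        fix i assume "i < Suc r"
        thus "(\<Sum>j<Suc r. H n i j * w j) = 0" using w(2)[rule_format, of i] w0 split[of n i w] by simp
      qed
      hence "\<forall>j<Suc (Suc r). w j = 0" using w0 less_Suc_eq by auto
      thus False using w(1) by blast
    qed
    show ?thesis
    proof (rule exI[of _ "\<lambda>j. w j / w (Suc r)"], intro conjI allI impI)
      show "w (Suc r) / w (Suc r) = 1" using wr by simp
      fix i assume i: "i < Suc (Suc r)"
      have "(\<Sum>j<Suc (Suc r). H n i j * (w j / w (Suc r))) = (\<Sum>j<Suc (Suc r). H n i j * w j) / w (Suc r)"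
        by (simp only: sum_divide_distrib times_divide_eq_right)
      thus "(\<Sum>j<Suc (Suc r). H n i j * (w j / w (Suc r))) = 0" using w(2) i by simp
    qed
  qed
  have uniq: "a j = b j" if "\<forall>i<Suc r. (\<Sum>j<Suc r. H n i j * a j) = (\<Sum>j<Suc r. H n i j * b j)" "j < Suc r"
    for n a b j
  proof -
    have "a j - b j = 0"
    proof (rule LA1[OF HC[of n] _ that(2)])
      fix i assume "i < Suc r"
      thus "(\<Sum>j<Suc r. H n i j * (a j - b j)) = 0"
        using that(1) by (simp add: right_diff_distrib sum_subtractf)
    qed
    thus ?thesis by simp
  qed
  have VW: "(\<Sum>j<Suc (Suc r). H n i j * W j) = (\<Sum>j<Suc (Suc r). H n i j * V j)"
    if "W (Suc r) = 1" "\<forall>j<Suc r. W j = v j" for n i W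
    using that unfolding V_def by (intro sum.cong) (auto simp: less_Suc_eq)
  define P where "P n = (\<forall>i<Suc r. e (n + int i) = 0)" for n
  have P0: "P 0"
    unfolding P_def
  proof (intro allI impI)
    fix i assume i: "i < Suc r"
    have "e (0 + int i) = (\<Sum>j<Suc r. H 0 i j * v j) + H 0 i (Suc r)" by (rule eH2)
    also have "\<dots> = 0" using v i unfolding H_def by simp
    finally show "e (0 + int i) = 0" .
  qed
  have Pup: "P (n + 1)" if Pn: "P n" for n
    unfolding P_def
  proof (intro allI impI)
    fix i assume i: "i < Suc r"
    show "e (n + 1 + int i) = 0"
    proof (cases "i < r")
      case True
      have "e (n + int (Suc i)) = 0" using Pn True unfolding P_def by blast
      moreover have "n + 1 + int i = n + int (Suc i)" by simp
      ultimately show ?thesis by metis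
    next
      case False
      hence ir: "i = r" using i by simp
      obtain W where W: "W (Suc r) = 1" "\<forall>i<Suc (Suc r). (\<Sum>j<Suc (Suc r). H n i j * W j) = 0"
        using kern[of n] by blast
      have Wv: "\<forall>j<Suc r. W j = v j"
      proof (intro allI impI, rule uniq[of n], intro allI impI)
        fix i assume i: "i < Suc r"
        have "(\<Sum>j<Suc r. H n i j * W j) = - H n i (Suc r)"
          using W(2)[rule_format, of i] split[of n i W] W(1) i by (simp add: eq_neg_iff_add_eq_0)
        moreover have "(\<Sum>j<Suc r. H n i j * v j) = - H n i (Suc r)"
          using Pn i eH2[of n i] unfolding P_def by (simp add: eq_neg_iff_add_eq_0)
        ultimately show "(\<Sum>j<Suc r. H n i j * W j) = (\<Sum>j<Suc r. H n i j * v j)" by simp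
      qed
      have "e (n + int (Suc r)) = 0"
        using eH[of n "Suc r"] VW[OF W(1) Wv, of n "Suc r"] W(2) by simp
      thus ?thesis using ir by (simp add: algebra_simps)
    qed
  qed
  have Pdown: "P (n - 1)" if Pn: "P n" for n
  proof -
    define m where "m = n - 1"
    have Pm1: "P (m + 1)" using Pn unfolding m_def by simp
    have "P m"
      unfolding P_def
    proof (intro allI impI)
      fix i assume i: "i < Suc r"
      show "e (m + int i) = 0"
      proof (cases i)
        case (Suc i')
        have "i' < Suc r" using Suc i by simp
        hence "e (m + 1 + int i') = 0" using Pm1 unfolding P_def by blast
        moreover have "m + int i = m + 1 + int i'" using Suc by simp
        ultimately show ?thesis by metis
      next
        case 0
        obtain W where W: "W (Suc r) = 1" "\<forall>i<Suc (Suc r). (\<Sum>j<Suc (Suc r). H m i j * W j) = 0"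
          using kern[of m] by blast
        have Wv: "\<forall>j<Suc r. W j = v j"
        proof (intro allI impI, rule uniq[of "m + 1"], intro allI impI)
          fix i assume i: "i < Suc r"
          have hh: "H m (Suc i) = H (m + 1) i" unfolding H_def by (intro ext) (simp add: algebra_simps)
          have "(\<Sum>j<Suc r. H (m+1) i j * W j) = - H (m+1) i (Suc r)"
            using W(2)[rule_format, of "Suc i"] split[of m "Suc i" W] W(1) i unfolding hh
            by (simp add: eq_neg_iff_add_eq_0)
          moreover have "(\<Sum>j<Suc r. H (m+1) i j * v j) = - H (m+1) i (Suc r)"
            using Pm1 i eH2[of "m+1" i] unfolding P_def by (simp add: eq_neg_iff_add_eq_0)
          ultimately show "(\<Sum>j<Suc r. H (m+1) i j * W j) = (\<Sum>j<Suc r. H (m+1) i j * v j)" by simp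
        qed
        have "e (m + int 0) = 0"
          using eH[of m 0] VW[OF W(1) Wv, of m 0] W(2) by simp
        thus ?thesis using 0 by simp
      qed
    qed
    thus ?thesis unfolding m_def .
  qed
  have Pall: "P n" for n
    by (rule int_induct[of P 0]) (use P0 Pup Pdown in auto)
  have e0: "e n = 0" for n using Pall[of n] unfolding P_def by auto
  define G where "G a b = (if a = r then - v 0 * R 1 (int b) else H 1 a b)" for a b
  have GD: "D (Suc r) G = D (Suc r) (H 1)"
  proof (rule D_addrows2[where i=r and m=r and s=0 and c="\<lambda>k. v (Suc k)"])
    fix a b assume a: "a < Suc r" and b: "b < Suc r"
    show "G a b = (if a = r then H 1 r b + (\<Sum>k<r. v (Suc k) * H 1 (0 + k) b) else H 1 a b)"
    proof (cases "a = r")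
      case True
      have "e (int b) = 0" by (rule e0)
      hence "(\<Sum>j<Suc r. R 1 (int b + int j) * v j) + R 1 (int b + int (Suc r)) = 0"
        unfolding e_def V_def by simp
      hence "R 1 (int b) * v 0 + (\<Sum>k<r. R 1 (int b + int (Suc k)) * v (Suc k)) + R 1 (int b + int (Suc r)) = 0"
        by (simp only: sum.lessThan_Suc_shift) simp
      moreover have "(\<Sum>k<r. v (Suc k) * H 1 (0 + k) b) = (\<Sum>k<r. R 1 (int b + int (Suc k)) * v (Suc k))"
        unfolding H_def by (intro sum.cong) (simp_all add: algebra_simps)
      moreover have "H 1 r b = R 1 (int b + int (Suc r))" unfolding H_def by (simp add: algebra_simps)
      ultimately show ?thesis using True unfolding G_def by (simp add: algebra_simps neg_eq_iff_add_eq_0)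
    next
      case False
      thus ?thesis unfolding G_def by simp
    qed
  qed simp_all
  have v0: "v 0 = - ((-1) ^ r)"
  proof -
    define Dj where "Dj j = D r (\<lambda>a b'. H 0 (Suc a) (if b' < j then b' else Suc b'))" for j
    have L1: "D (Suc r) G = (\<Sum>j<Suc r. G r j * ((-1)^(r+j) * Dj j))"
    proof -
      have "D (Suc r) G = (\<Sum>j<Suc r. G r j * ((-1)^(r+j) * D r (\<lambda>a b. G (if a < r then a else Suc a) (if b < j then b else Suc b))))"
        by (rule D_laplace) simp
      also have "\<dots> = (\<Sum>j<Suc r. G r j * ((-1)^(r+j) * Dj j))"
      proof (rule sum.cong[OF refl])
        fix j assume "j \<in> {..<Suc r}"
        have "D r (\<lambda>a b. G (if a < r then a else Suc a) (if b < j then b else Suc b)) = Dj j"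
          unfolding Dj_def by (rule D_cong) (simp add: G_def H_def algebra_simps)
        thus "G r j * ((-1)^(r+j) * D r (\<lambda>a b. G (if a < r then a else Suc a) (if b < j then b else Suc b)))
          = G r j * ((-1)^(r+j) * Dj j)" by simp
      qed
      finally show ?thesis .
    qed
    have L2: "D (Suc r) (H 0) = (\<Sum>j<Suc r. H 0 0 j * ((-1)^(0+j) * Dj j))"
    proof -
      have "D (Suc r) (H 0) = (\<Sum>j<Suc r. H 0 0 j * ((-1)^(0+j) * D r (\<lambda>a b. H 0 (if a < 0 then a else Suc a) (if b < j then b else Suc b))))"
        by (rule D_laplace) simp
      also have "\<dots> = (\<Sum>j<Suc r. H 0 0 j * ((-1)^(0+j) * Dj j))"
        unfolding Dj_def by simp
      finally show ?thesis .
    qed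
    have "D (Suc r) G = (\<Sum>j<Suc r. (- v 0 * (-1)^r) * (H 0 0 j * ((-1)^(0+j) * Dj j)))"
      unfolding L1 by (intro sum.cong refl) (simp add: G_def H_def power_add)
    also have "\<dots> = - v 0 * (-1)^r * D (Suc r) (H 0)" unfolding L2 sum_distrib_left ..
    finally have "1 = - v 0 * (-1)^r" using GD C[of 1] C[of 0] by simp
    hence vs: "v 0 * (-1)^r = -1" by (metis minus_minus mult_minus_left)
    have sq: "(-1::'a)^r * (-1)^r = 1" by (simp add: power_add[symmetric] mult_2[symmetric] power_mult)
    have "v 0 = v 0 * ((-1)^r * (-1)^r)" using sq by simp
    also have "\<dots> = (v 0 * (-1)^r) * (-1)^r" by (simp only: mult.assoc)
    also have "\<dots> = - ((-1)^r)" unfolding vs by simp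
    finally show ?thesis .
  qed
  define c where "c k = (-1) ^ (r + 1) * ((-1) ^ (r + 1 - k) * V (r + 1 - k))" for k
  have c0: "c 0 = 1"
    unfolding c_def V_def by (simp add: power_add[symmetric] mult_2[symmetric] power_mult)
  have cr: "c (r + 1) = 1"
    unfolding c_def V_def using v0 by (simp add: power_add[symmetric] mult_2[symmetric] power_mult)
  have csum: "(\<Sum>m = 0..r + 1. (-1) ^ m * c (r + 1 - m) * R 1 (n + int m)) = 0" for n
  proof -
    have "(\<Sum>m = 0..r + 1. (-1) ^ m * c (r + 1 - m) * R 1 (n + int m))
        = (\<Sum>m<Suc (Suc r). (-1) ^ (r + 1) * (R 1 (n + int m) * V m))"
    proof -
      have "{0..r+1} = {..<Suc (Suc r)}" by auto
      moreover have "(-1) ^ m * c (r + 1 - m) * R 1 (n + int m) = (-1) ^ (r + 1) * (R 1 (n + int m) * V m)"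
        if "m < Suc (Suc r)" for m
      proof -
        have "r + 1 - (r + 1 - m) = m" using that by simp
        hence "(-1) ^ m * c (r + 1 - m) * R 1 (n + int m) = (-1) ^ (r + 1) * (R 1 (n + int m) * V m) * ((-1::'a) ^ m * (-1) ^ m)"
          unfolding c_def by (simp add: algebra_simps)
        also have "(-1::'a) ^ m * (-1) ^ m = 1" by (simp add: power_add[symmetric] mult_2[symmetric] power_mult)
        finally show ?thesis by simp
      qed
      ultimately show ?thesis by (auto intro!: sum.cong)
    qed
    also have "\<dots> = (-1) ^ (r + 1) * e n" unfolding e_def sum_distrib_left ..
    finally show ?thesis using e0 by simp
  qed
  define SS where "SS = {R \<alpha> k | \<alpha> k. \<alpha> \<in> {1..r} \<and> k \<in> {0, 1}}"
  define Rin where "Rin k = (\<forall>a\<le>Suc r. R a k \<in> rat_subfield SS)" for k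
  have Rin_gen: "R a k \<in> rat_subfield SS" if "a \<le> Suc r" "k \<in> {0,1}" for a k
  proof (cases "a = 0 \<or> a = Suc r")
    case True thus ?thesis using R0 Rr sf_1 by auto
  next
    case False
    hence "1 \<le> a" "a \<le> r" using that by auto
    hence "R a k \<in> SS" unfolding SS_def
      by (intro CollectI exI[of _ a] exI[of _ k]) (use that(2) in auto)
    thus ?thesis by (rule rat_subfield.gen)
  qed
  have Rnext: "R a k = ((R a (k+1))\<^sup>2 + R (Suc a) (k+1) * R (a - 1) (k+1)) / R a (k+2)"
    "R a (k+2) = ((R a (k+1))\<^sup>2 + R (Suc a) (k+1) * R (a - 1) (k+1)) / R a k"
    if "1 \<le> a" "a \<le> r" for a k
  proof -
    have "R a (k + 1 + 1) * R a (k + 1 - 1) = (R a (k+1))\<^sup>2 + R (Suc a) (k+1) * R (a - 1) (k+1)"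
      by (rule Q[OF that])
    hence q: "R a (k + 2) * R a k = (R a (k+1))\<^sup>2 + R (Suc a) (k+1) * R (a - 1) (k+1)"
      by (simp add: algebra_simps)
    have "R a (k+2) \<noteq> 0" "R a k \<noteq> 0" using NZ that by auto
    thus "R a k = ((R a (k+1))\<^sup>2 + R (Suc a) (k+1) * R (a - 1) (k+1)) / R a (k+2)"
      "R a (k+2) = ((R a (k+1))\<^sup>2 + R (Suc a) (k+1) * R (a - 1) (k+1)) / R a k"
      using q by (simp_all add: field_simps)
  qed
  have Rstep: "R a k' \<in> rat_subfield SS"
    if "Rin km" "Rin kd" "a \<le> Suc r"
       "R a k' = ((R a km)\<^sup>2 + R (Suc a) km * R (a - 1) km) / R a kd \<or> a = 0 \<or> a = Suc r"
    for a k' km kd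
  proof (cases "a = 0 \<or> a = Suc r")
    case True thus ?thesis using R0 Rr sf_1 by auto
  next
    case False
    hence eq: "R a k' = ((R a km)\<^sup>2 + R (Suc a) km * R (a - 1) km) / R a kd" using that by auto
    show ?thesis unfolding eq
      by (intro sf_div rat_subfield.add rat_subfield.mult sf_pow)
         (use that False in \<open>auto simp: Rin_def\<close>)
  qed
  have Rin_all: "Rin k \<and> Rin (k + 1)" for k
  proof (rule int_induct[of "\<lambda>k. Rin k \<and> Rin (k + 1)" 0])
    show "Rin 0 \<and> Rin (0 + 1)" unfolding Rin_def using Rin_gen by auto
  next
    fix i assume "0 \<le> i" and h: "Rin i \<and> Rin (i + 1)"
    have "Rin (i + 2)" unfolding Rin_def
    proof (intro allI impI)
      fix a assume a: "a \<le> Suc r"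
      show "R a (i + 2) \<in> rat_subfield SS"
      proof (rule Rstep[of "i + 1" i])
        show "R a (i + 2) = ((R a (i+1))\<^sup>2 + R (Suc a) (i+1) * R (a - 1) (i+1)) / R a i \<or> a = 0 \<or> a = Suc r"
          using Rnext(2)[of a i] a by (cases "a = 0 \<or> a = Suc r") auto
      qed (use h a in auto)
    qed
    thus "Rin (i + 1) \<and> Rin (i + 1 + 1)" using h by (simp add: add.assoc)
  next
    fix i assume "i \<le> 0" and h: "Rin i \<and> Rin (i + 1)"
    have "Rin (i - 1)" unfolding Rin_def
    proof (intro allI impI)
      fix a assume a: "a \<le> Suc r"
      show "R a (i - 1) \<in> rat_subfield SS"
      proof (rule Rstep[of i "i + 1"])
        show "R a (i - 1) = ((R a i)\<^sup>2 + R (Suc a) i * R (a - 1) i) / R a (i + 1) \<or> a = 0 \<or> a = Suc r"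
        proof (cases "a = 0 \<or> a = Suc r")
          case False
          hence "1 \<le> a" "a \<le> r" using a by auto
          from Rnext(1)[OF this, of "i - 1"] show ?thesis by (simp add: add.commute)
        qed auto
      qed (use h a in auto)
    qed
    thus "Rin (i - 1) \<and> Rin (i - 1 + 1)" using h by simp
  qed
  have R1in: "R 1 k \<in> rat_subfield SS" for k using Rin_all[of k] unfolding Rin_def by simp
  have vin: "v j \<in> rat_subfield SS" if "j < Suc r" for j
  proof -
    have "v j * D (Suc r) (H 0) = D (Suc r) (\<lambda>i j'. if j' = j then - R 1 (int (i + Suc r)) else H 0 i j')"
      by (rule cramer_D[OF _ that]) (use v in auto)
    hence "v j = D (Suc r) (\<lambda>i j'. if j' = j then - R 1 (int (i + Suc r)) else H 0 i j')"
      using C[of 0] by simp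
    also have "\<dots> \<in> rat_subfield SS"
      using R1in by (intro sf_D) (auto simp: H_def intro!: rat_subfield.neg)
    finally show ?thesis .
  qed
  have m1: "(-1::'a) \<in> rat_subfield SS" using sf_of_int[of "-1" SS] by simp
  have cin: "c i \<in> rat_subfield SS" if "i \<in> {1..r}" for i
  proof -
    have "V (r + 1 - i) = v (r + 1 - i)" unfolding V_def using that by auto
    moreover have "v (r + 1 - i) \<in> rat_subfield SS" using vin that by auto
    ultimately show ?thesis unfolding c_def
      by (intro rat_subfield.mult sf_pow m1) auto
  qed
  show ?thesis
    by (rule exI[of _ c]) (use cin c0 cr csum in \<open>auto simp: SS_def\<close>)
qed

end
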